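(* Let $\psi$ be a mean on $L^{\infty}(\mathbb{R}_+^{\times})$. Then $\psi\in\mathcal{L}_1$ if and only if $\psi(f-Uf)=0$ for every $f\in L^{\infty}(\mathbb{R}_+^{\times})$; equivalently, $\psi\in\mathcal{L}_1$ if and only if $\psi(Uf)=\psi(f)$ for all $f\in L^{\infty}(\mathbb{R}_+^{\times})$.
   Context: $\mathbb{R}_+^{\times}=[1,\infty)$ and $L^{\infty}(\mathbb{R}_+^{\times})$ is the Banach space of real-valued essentially bounded measurable functions on it. A mean is a linear functional $\psi$ with $\psi(f)\ge0$ whenever $f\ge 0$ a.e. and $\psi(1)=1$. Define $\overline{L}_1(f)=\lim_{\theta\to\infty}\limsup_{x\to\infty}\frac{1}{\log\theta}\int_x^{\theta x}f(t)\frac{dt}{t}$ and let $\mathcal{L}_1$ be the set of means $\psi$ on $L^{\infty}(\mathbb{R}_+^{\times})$ with $\psi(f)\le\overline{L}_1(f)$ for all $f$. The operator $U$ on $L^{\infty}(\mathbb{R}_+^{\times})$ is $(Uf)(x)=\frac{1}{x}\int_1^x f(t)\,dt$. *)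

theory Defs
  imports "HOL-Analysis.Analysis"
begin

abbreviation Rplus :: "real measure" where
  "Rplus \<equiv> lebesgue_on {1..}"

text \<open>Representatives of elements of L-infinity on [1, infinity): measurable, essentially bounded.
  Functionals respecting positivity a.e. automatically respect a.e.-equality.\<close>
definition Linf :: "(real \<Rightarrow> real) set" where
  "Linf = {f. f \<in> borel_measurable Rplus \<and> (\<exists>C. AE x in Rplus. \<bar>f x\<bar> \<le> C)}"

definition is_mean :: "((real \<Rightarrow> real) \<Rightarrow> real) \<Rightarrow> bool" where
  "is_mean \<psi> \<longleftrightarrow>
     (\<forall>f\<in>Linf. \<forall>g\<in>Linf. \<psi> (\<lambda>x. f x + g x) = \<psi> f + \<psi> g) \<and>
     (\<forall>f\<in>Linf. \<forall>c::real. \<psi> (\<lambda>x. c * f x) = c * \<psi> f) \<and>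
     (\<forall>f\<in>Linf. (AE x in Rplus. 0 \<le> f x) \<longrightarrow> 0 \<le> \<psi> f) \<and>
     \<psi> (\<lambda>_. 1) = 1"

definition Lbar1 :: "(real \<Rightarrow> real) \<Rightarrow> ereal" where
  "Lbar1 f = Lim at_top (\<lambda>\<theta>::real. Limsup at_top (\<lambda>x::real.
      ereal ((1 / ln \<theta>) * (\<integral>t. f t / t \<partial>lebesgue_on {x..\<theta> * x}))))"

definition L1_means :: "((real \<Rightarrow> real) \<Rightarrow> real) set" where
  "L1_means = {\<psi>. is_mean \<psi> \<and> (\<forall>f\<in>Linf. ereal (\<psi> f) \<le> Lbar1 f)}"

definition Uop :: "(real \<Rightarrow> real) \<Rightarrow> real \<Rightarrow> real" where
  "Uop f = (\<lambda>x. (1 / x) * (\<integral>t. f t \<partial>lebesgue_on {1..x}))"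

end

theory Submission
  imports Defs
begin

lemma AE_Rplus: "(\<And>x. x \<ge> 1 \<Longrightarrow> P x) \<Longrightarrow> AE x in Rplus. P x"
  by (rule AE_I2) (auto simp: space_restrict_space)

lemma Linf_add: "f \<in> Linf \<Longrightarrow> g \<in> Linf \<Longrightarrow> (\<lambda>x. f x + g x) \<in> Linf"
proof -
  assume f: "f \<in> Linf" and g: "g \<in> Linf"
  then obtain C D where C: "AE x in Rplus. \<bar>f x\<bar> \<le> C" and D: "AE x in Rplus. \<bar>g x\<bar> \<le> D"
    by (auto simp: Linf_def)
  have "AE x in Rplus. \<bar>f x + g x\<bar> \<le> C + D" using C D by eventually_elim auto
  then show ?thesis using f g by (auto simp: Linf_def)
qed

lemma Linf_cmult: "f \<in> Linf \<Longrightarrow> (\<lambda>x. c * f x) \<in> Linf"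
proof -
  assume f: "f \<in> Linf"
  then obtain C where C: "AE x in Rplus. \<bar>f x\<bar> \<le> C" by (auto simp: Linf_def)
  have "AE x in Rplus. \<bar>c * f x\<bar> \<le> \<bar>c\<bar> * C" using C by eventually_elim (auto simp: abs_mult mult_left_mono)
  then show ?thesis using f by (auto simp: Linf_def)
qed

lemma Linf_diff: "f \<in> Linf \<Longrightarrow> g \<in> Linf \<Longrightarrow> (\<lambda>x. f x - g x) \<in> Linf"
  using Linf_add[of f "\<lambda>x. (-1) * g x"] Linf_cmult[of g "-1"] by simp

lemma Linf_cont:
  assumes "continuous_on {1..} f" "\<And>x. x \<ge> 1 \<Longrightarrow> \<bar>f x\<bar> \<le> C"
  shows "f \<in> Linf"
  unfolding Linf_def using assms
  by (auto intro!: continuous_imp_measurable_on_sets_lebesgue AE_Rplus)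

lemma Linf_const: "(\<lambda>_. c) \<in> Linf"
  by (rule Linf_cont[where C="\<bar>c\<bar>"]) auto

lemma Linf_inv: "(\<lambda>x. 1 / x) \<in> Linf"
  by (rule Linf_cont[where C=1]) (auto intro!: continuous_intros)

locale mean =
  fixes \<psi> :: "(real \<Rightarrow> real) \<Rightarrow> real"
  assumes is_mean: "is_mean \<psi>"
begin

lemma add: "f \<in> Linf \<Longrightarrow> g \<in> Linf \<Longrightarrow> \<psi> (\<lambda>x. f x + g x) = \<psi> f + \<psi> g"
  using is_mean by (auto simp: is_mean_def)

lemma cmult: "f \<in> Linf \<Longrightarrow> \<psi> (\<lambda>x. c * f x) = c * \<psi> f"
  using is_mean by (auto simp: is_mean_def)

lemma pos: "f \<in> Linf \<Longrightarrow> (AE x in Rplus. 0 \<le> f x) \<Longrightarrow> 0 \<le> \<psi> f"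
  using is_mean by (auto simp: is_mean_def)

lemma one: "\<psi> (\<lambda>_. 1) = 1"
  using is_mean by (auto simp: is_mean_def)

lemma diff: "f \<in> Linf \<Longrightarrow> g \<in> Linf \<Longrightarrow> \<psi> (\<lambda>x. f x - g x) = \<psi> f - \<psi> g"
  using add[of f "\<lambda>x. (-1) * g x"] cmult[of g "-1"] Linf_cmult[of g "-1"] by simp

lemma const: "\<psi> (\<lambda>_. c) = c"
  using cmult[of "\<lambda>_. 1" c] one Linf_const by simp

lemma mono_AE: "f \<in> Linf \<Longrightarrow> g \<in> Linf \<Longrightarrow> (AE x in Rplus. f x \<le> g x) \<Longrightarrow> \<psi> f \<le> \<psi> g"
  using pos[of "\<lambda>x. g x - f x"] diff[of g f] Linf_diff[of g f] by auto

lemma mono: "f \<in> Linf \<Longrightarrow> g \<in> Linf \<Longrightarrow> (\<And>x. x \<ge> 1 \<Longrightarrow> f x \<le> g x) \<Longrightarrow> \<psi> f \<le> \<psi> g"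
  by (rule mono_AE) (auto intro: AE_Rplus)

lemma cong_AE: "f \<in> Linf \<Longrightarrow> g \<in> Linf \<Longrightarrow> (AE x in Rplus. f x = g x) \<Longrightarrow> \<psi> f = \<psi> g"
  by (rule antisym; rule mono_AE) (auto elim: AE_mp)

lemma cong: "f \<in> Linf \<Longrightarrow> g \<in> Linf \<Longrightarrow> (\<And>x. x \<ge> 1 \<Longrightarrow> f x = g x) \<Longrightarrow> \<psi> f = \<psi> g"
  by (rule cong_AE) (auto intro: AE_Rplus)

end

lemma AE_Rplus_iff: "(AE x in Rplus. P x) \<longleftrightarrow> (AE x in lebesgue. x \<in> {1..} \<longrightarrow> P x)"
  by (rule AE_restrict_space_iff) auto

lemma AE_Rplus_sub:
  assumes "AE x in Rplus. P x" "1 \<le> a"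
  shows "AE x in lebesgue_on {a..b}. P x"
proof -
  have "AE x in lebesgue. x \<in> {a..b} \<longrightarrow> P x"
    using assms(1) unfolding AE_Rplus_iff by eventually_elim (use assms(2) in auto)
  then show ?thesis by (subst AE_restrict_space_iff) auto
qed

lemma borel_version:
  assumes "f \<in> Linf"
  obtains g C where "g \<in> borel_measurable borel" "\<And>x. \<bar>g x\<bar> \<le> C" "AE x in Rplus. f x = g x"
proof -
  from assms obtain C where f: "f \<in> borel_measurable Rplus" and C: "AE x in Rplus. \<bar>f x\<bar> \<le> C"
    by (auto simp: Linf_def)
  define f1 where "f1 x = (if x \<in> {1::real..} then f x else 0)" for x
  have "f1 \<in> borel_measurable lebesgue"
    unfolding f1_def by (rule borel_measurable_if_I[OF f]) auto
  then have "f1 \<in> borel_measurable (completion lborel)" by simp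
  from completion_ex_borel_measurable_real[OF this]
  obtain g' where g': "g' \<in> borel_measurable lborel" "AE x in lborel. f1 x = g' x" by blast
  define g where "g x = max (- C) (min C (g' x))" for x
  have gm: "g \<in> borel_measurable borel" using g'(1) unfolding g_def by simp
  have gb: "\<bar>g x\<bar> \<le> \<bar>C\<bar>" for x unfolding g_def by (auto simp: abs_le_iff max_def min_def)
  have "AE x in lebesgue. f1 x = g' x" using g'(2) by (simp add: AE_completion)
  moreover have "AE x in lebesgue. x \<in> {1..} \<longrightarrow> \<bar>f x\<bar> \<le> C" using C unfolding AE_Rplus_iff .
  ultimately have "AE x in lebesgue. x \<in> {1..} \<longrightarrow> f x = g x"
    by eventually_elim (auto simp: f1_def g_def)
  then have "AE x in Rplus. f x = g x" unfolding AE_Rplus_iff .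
  with gm gb show ?thesis using that by blast
qed


lemma Icc_lebesgue[simp]: "{a..b::real} \<in> sets lebesgue"
  using fmeasurableD[OF lmeasurable_cbox[of a b]] by simp

lemma borel_lebesgue_on: "h \<in> borel_measurable borel \<Longrightarrow> h \<in> borel_measurable (lebesgue_on S)"
  by (rule measurable_restrict_space1) (simp add: measurable_completion)

lemma bb_integrable:
  fixes h :: "real \<Rightarrow> real"
  assumes "h \<in> borel_measurable borel" "\<And>x. x \<in> {a..b} \<Longrightarrow> \<bar>h x\<bar> \<le> B"
  shows "integrable (lebesgue_on {a..b}) h"
proof (rule measurable_bounded_by_integrable_imp_lebesgue_integrable[where g="\<lambda>_. B"])
  show "h \<in> borel_measurable (lebesgue_on {a..b})" by (rule borel_lebesgue_on[OF assms(1)])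
  show "integrable (lebesgue_on {a..b}) (\<lambda>_. B)"
    by (rule continuous_imp_integrable_real) (rule continuous_on_const)
  show "norm (h x) \<le> B" if "x \<in> {a..b}" for x using assms(2)[OF that] by simp
qed simp

lemma bb_integrable_on:
  fixes h :: "real \<Rightarrow> real"
  assumes "h \<in> borel_measurable borel" "\<And>x. x \<in> {a..b} \<Longrightarrow> \<bar>h x\<bar> \<le> B"
  shows "h integrable_on {a..b}"
  by (rule integrable_on_lebesgue_on[OF bb_integrable[OF assms] Icc_lebesgue])

lemma bb_integral_eq:
  fixes h :: "real \<Rightarrow> real"
  assumes "h \<in> borel_measurable borel" "\<And>x. x \<in> {a..b} \<Longrightarrow> \<bar>h x\<bar> \<le> B"
  shows "integral\<^sup>L (lebesgue_on {a..b}) h = integral {a..b} h"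
  by (rule lebesgue_integral_eq_integral[OF bb_integrable[OF assms]]) auto

lemma integral_abs_bound:
  fixes h :: "real \<Rightarrow> real"
  assumes hi: "h integrable_on {a..b}" and hb: "\<And>x. x \<in> {a..b} \<Longrightarrow> \<bar>h x\<bar> \<le> B" and ab: "a \<le> b"
  shows "\<bar>integral {a..b} h\<bar> \<le> B * (b - a)"
proof -
  have ci: "(\<lambda>_. c) integrable_on {a..b}" for c :: real by (rule Henstock_Kurzweil_Integration.integrable_const_ivl)
  have "integral {a..b} h \<le> integral {a..b} (\<lambda>_. B)"
  proof (rule integral_le[OF hi ci])
    show "h x \<le> B" if "x \<in> {a..b}" for x using hb[OF that] by linarith
  qed
  moreover have "integral {a..b} (\<lambda>_. -B) \<le> integral {a..b} h"
  proof (rule integral_le[OF ci hi])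
    show "- B \<le> h x" if "x \<in> {a..b}" for x using hb[OF that] by linarith
  qed
  moreover have "integral {a..b} (\<lambda>_. B) = B * (b - a)" "integral {a..b} (\<lambda>_. -B) = - B * (b - a)"
    using ab by simp_all
  ultimately show ?thesis using ab by (simp add: abs_le_iff mult.commute)
qed

lemma lb_integrable:
  fixes h :: "real \<Rightarrow> real"
  assumes hm: "h \<in> borel_measurable borel" and hb: "\<And>x. x \<in> {a..b} \<Longrightarrow> \<bar>h x\<bar> \<le> B"
  shows "integrable lborel (\<lambda>t. indicator {a..b} t * h t)"
proof (rule Bochner_Integration.integrable_bound)
  show "integrable lborel (\<lambda>t. \<bar>B\<bar> * indicator {a..b} t :: real)"
    by (intro integrable_mult_right integrable_real_indicator) (auto simp: emeasure_lborel_Icc_eq)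
  show "(\<lambda>t. indicator {a..b} t * h t) \<in> borel_measurable lborel" using hm by simp
  show "AE x in lborel. norm (indicator {a..b} x * h x) \<le> norm (\<bar>B\<bar> * indicator {a..b} x :: real)"
  proof (rule AE_I2)
    fix x show "norm (indicator {a..b} x * h x) \<le> norm (\<bar>B\<bar> * indicator {a..b} x :: real)"
    proof (cases "x \<in> {a..b}")
      case True then show ?thesis using hb[OF True] by (simp add: indicator_def)
    next
      case False then show ?thesis by (auto simp: indicator_def)
    qed
  qed
qed

lemma lb_eq:
  fixes h :: "real \<Rightarrow> real"
  assumes hm: "h \<in> borel_measurable borel" and hb: "\<And>x. x \<in> {a..b} \<Longrightarrow> \<bar>h x\<bar> \<le> B"
  shows "(\<integral>t. indicator {a..b} t * h t \<partial>lborel) = integral {a..b} h"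
proof -
  have "set_integrable lborel {a..b} h"
    unfolding set_integrable_def using lb_integrable[OF hm hb] by simp
  from set_borel_integral_eq_integral(2)[OF this] show ?thesis
    by (simp add: set_lebesgue_integral_def)
qed

lemma Lim_zero:
  fixes q :: "real \<Rightarrow> real \<Rightarrow> real"
  assumes qb: "\<And>\<theta> x. \<theta> > 1 \<Longrightarrow> x \<ge> 1 \<Longrightarrow> \<bar>q \<theta> x\<bar> \<le> B / ln \<theta>"
  shows "Lim at_top (\<lambda>\<theta>. Limsup at_top (\<lambda>x. ereal (q \<theta> x))) = 0"
proof (rule tendsto_Lim)
  show "\<not> trivial_limit (at_top :: real filter)" by simp
  have lim: "((\<lambda>\<theta>. c / ln \<theta>) \<longlongrightarrow> 0) at_top" for c :: real
    by (rule tendsto_divide_0[OF tendsto_const filterlim_at_top_imp_at_infinity[OF ln_at_top]])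
  have limE: "((\<lambda>\<theta>. ereal (c / ln \<theta>)) \<longlongrightarrow> 0) at_top" for c :: real
    using tendsto_ereal[OF lim[of c]] by (simp add: zero_ereal_def)
  have up: "\<forall>\<^sub>F \<theta> in at_top. Limsup at_top (\<lambda>x. ereal (q \<theta> x)) \<le> ereal (B / ln \<theta>)"
    using eventually_gt_at_top[of 1]
  proof eventually_elim
    case (elim \<theta>)
    show ?case
    proof (rule Limsup_bounded)
      show "\<forall>\<^sub>F x in at_top. ereal (q \<theta> x) \<le> ereal (B / ln \<theta>)"
        using eventually_ge_at_top[of "1::real"] by eventually_elim (use qb[OF elim] in \<open>auto simp: abs_le_iff\<close>)
    qed
  qed
  have low: "\<forall>\<^sub>F \<theta> in at_top. ereal (- B / ln \<theta>) \<le> Limsup at_top (\<lambda>x. ereal (q \<theta> x))"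
    using eventually_gt_at_top[of 1]
  proof eventually_elim
    case (elim \<theta>)
    show ?case
    proof (rule le_Limsup)
      show "(at_top :: real filter) \<noteq> bot" by simp
      show "\<forall>\<^sub>F x in at_top. ereal (- B / ln \<theta>) \<le> ereal (q \<theta> x)"
        using eventually_ge_at_top[of "1::real"]
      proof eventually_elim
        case (elim x)
        from qb[OF \<open>\<theta> > 1\<close> elim] show ?case by (simp add: abs_le_iff)
      qed
    qed
  qed
  show "((\<lambda>\<theta>. Limsup at_top (\<lambda>x. ereal (q \<theta> x))) \<longlongrightarrow> 0) at_top"
    by (rule tendsto_sandwich[OF low up limE limE])
qed

lemma fekete_iter:
  fixes \<phi> :: "real \<Rightarrow> real"
  assumes sub: "\<And>a b. a \<ge> 0 \<Longrightarrow> b \<ge> 0 \<Longrightarrow> \<phi> (a + b) \<le> \<phi> a + \<phi> b"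
    and a: "a \<ge> 0" and r: "r \<ge> 0"
  shows "\<phi> (real n * a + r) \<le> real n * \<phi> a + \<phi> r"
proof (induction n)
  case 0 then show ?case by simp
next
  case (Suc n)
  have "\<phi> (real (Suc n) * a + r) = \<phi> (a + (real n * a + r))" by (simp add: algebra_simps)
  also have "\<dots> \<le> \<phi> a + \<phi> (real n * a + r)" by (rule sub) (use a r in auto)
  also have "\<dots> \<le> \<phi> a + (real n * \<phi> a + \<phi> r)" using Suc by simp
  finally show ?case by (simp add: algebra_simps)
qed

lemma fekete:
  fixes \<phi> :: "real \<Rightarrow> real"
  assumes sub: "\<And>a b. a \<ge> 0 \<Longrightarrow> b \<ge> 0 \<Longrightarrow> \<phi> (a + b) \<le> \<phi> a + \<phi> b"
    and bnd: "\<And>a. a \<ge> 0 \<Longrightarrow> \<bar>\<phi> a\<bar> \<le> K * a"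
  shows "\<exists>m. ((\<lambda>u. \<phi> u / u) \<longlongrightarrow> m) at_top"
proof -
  define S where "S = (\<lambda>a. \<phi> a / a) ` {0<..}"
  have bdd: "bdd_below S"
  proof (rule bdd_belowI)
    fix y assume "y \<in> S"
    then obtain a where a: "a > 0" "y = \<phi> a / a" by (auto simp: S_def)
    have "- K * a \<le> \<phi> a" using bnd[of a] a by (auto simp: abs_le_iff)
    then show "- K \<le> y" using a by (simp add: le_divide_eq)
  qed
  have Sne: "S \<noteq> {}" by (auto simp: S_def)
  define m where "m = Inf S"
  have lower: "m \<le> \<phi> u / u" if "u > 0" for u
    unfolding m_def by (rule cInf_lower[OF _ bdd]) (use that in \<open>auto simp: S_def\<close>)
  show ?thesis
  proof (intro exI tendstoI)
    fix e :: real assume e: "e > 0"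
    have "Inf S < m + e / 2" using e by (simp add: m_def)
    then obtain y where "y \<in> S" "y < m + e / 2" using cInf_less_iff[OF Sne bdd] by blast
    then obtain a where a: "a > 0" "\<phi> a / a < m + e / 2" by (auto simp: S_def)
    define R where "R = \<bar>\<phi> a\<bar> + K * a"
    have R: "R \<ge> 0" using bnd[of a] a by (simp add: R_def) 
    show "\<forall>\<^sub>F u in at_top. dist (\<phi> u / u) m < e"
    proof (rule eventually_at_top_linorder[THEN iffD2], intro exI allI impI)
      fix u assume u: "u \<ge> max a (2 * R / e + 1)"
      then have ua: "u \<ge> a" and upos: "u > 0" using a R e
        by (auto simp: max_def split: if_splits)
      define n where "n = nat \<lfloor>u / a\<rfloor>"
      have n1: "real n \<le> u / a" "u / a < real n + 1"
        using a ua by (auto simp: n_def)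
      define r where "r = u - real n * a"
      have r: "0 \<le> r" "r < a" using n1 a
        by (auto simp: r_def field_simps)
      have "\<phi> u = \<phi> (real n * a + r)" by (simp add: r_def)
      also have "\<dots> \<le> real n * \<phi> a + \<phi> r" by (rule fekete_iter[OF sub]) (use a r in auto)
      finally have phiu: "\<phi> u \<le> real n * \<phi> a + \<phi> r" .
      have "0 \<le> K * a" using bnd[of a] a abs_ge_zero[of "\<phi> a"] by linarith
      then have K0: "K \<ge> 0" using a by (simp add: zero_le_mult_iff)
      have "K * r \<le> K * a" using K0 r by (intro mult_left_mono) auto
      then have "\<phi> r \<le> K * a" using bnd[of r] r by (simp add: abs_le_iff)
      moreover have "real n * \<phi> a \<le> (u / a) * \<phi> a + \<bar>\<phi> a\<bar>"
      proof (cases "\<phi> a \<ge> 0")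
        case True then show ?thesis using n1 by (smt (verit) mult_right_mono)
      next
        case False
        have "(u / a - 1) * \<phi> a \<ge> real n * \<phi> a" using n1 False
          by (intro mult_right_mono_neg) auto
        then show ?thesis using False by (simp add: algebra_simps)
      qed
      ultimately have "\<phi> u \<le> u * (\<phi> a / a) + R" using phiu by (simp add: R_def)
      then have "\<phi> u / u \<le> \<phi> a / a + R / u" using upos by (simp add: field_simps)
      moreover have "R / u < e / 2"
      proof -
        have "2 * R / e < u" using u by auto
        then show ?thesis using e upos by (simp add: field_simps)
      qed
      ultimately have "\<phi> u / u < m + e" using a by linarith
      with lower[OF upos] show "dist (\<phi> u / u) m < e" using e by (simp add: dist_real_def)
    qed
  qed
qed
locale bg =
  fixes g :: "real \<Rightarrow> real" and C :: real
  assumes gm[measurable]: "g \<in> borel_measurable borel" and gb: "\<And>x. \<bar>g x\<bar> \<le> C"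
begin

lemma C_nonneg: "0 \<le> C" using gb[of 0] by linarith

lemma gint: "g integrable_on {a..b}"
  by (rule bb_integrable_on[where B=C]) (auto simp: gb)

lemma gtint: assumes "a > 0" shows "(\<lambda>t. g t / t) integrable_on {a..b}"
proof (rule bb_integrable_on[where B="C / a"])
  show "(\<lambda>t. g t / t) \<in> borel_measurable borel" by measurable
  fix t assume t: "t \<in> {a..b}"
  then have "a \<le> \<bar>t\<bar>" using assms by auto
  then show "\<bar>g t / t\<bar> \<le> C / a" unfolding abs_divide
    by (intro frac_le C_nonneg gb) (use assms in auto)
qed

definition "I x = integral {1..x} g"

lemma I_small: "x \<le> 1 \<Longrightarrow> I x = 0"
  unfolding I_def by (cases "x = 1") auto

lemma I_diff: "1 \<le> x \<Longrightarrow> x \<le> y \<Longrightarrow> I y - I x = integral {x..y} g"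
proof -
  assume "1 \<le> x" "x \<le> y"
  from Henstock_Kurzweil_Integration.integral_combine[OF this gint]
  show ?thesis unfolding I_def by linarith
qed

lemma I_lip: "\<bar>I x - I y\<bar> \<le> C * \<bar>x - y\<bar>"
proof -
  have *: "\<bar>I y - I x\<bar> \<le> C * (y - x)" if "x \<le> y" for x y
  proof (cases "y \<le> 1")
    case True
    then have "I x = 0" "I y = 0" using that I_small by auto
    then show ?thesis using C_nonneg that by simp
  next
    case False
    define x' where "x' = max 1 x"
    have x': "1 \<le> x'" "x' \<le> y" "x \<le> x'" using False that by (auto simp: x'_def)
    have "I x = I x'"
    proof (cases "x \<le> 1")
      case True then show ?thesis using I_small[of x] I_small[of 1] by (simp add: x'_def)
    next
      case False then show ?thesis by (simp add: x'_def)
    qed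
    moreover have "\<bar>integral {x'..y} g\<bar> \<le> C * (y - x')"
      by (rule integral_abs_bound) (use x' gb gint in auto)
    moreover have "C * (y - x') \<le> C * (y - x)"
      using C_nonneg x' by (intro mult_left_mono) auto
    moreover have "I y - I x' = integral {x'..y} g" using I_diff x' by blast
    ultimately show ?thesis by linarith
  qed
  show ?thesis
  proof (cases "x \<le> y")
    case True
    have "\<bar>I x - I y\<bar> = \<bar>I y - I x\<bar>" by (rule abs_minus_commute)
    moreover have "\<bar>x - y\<bar> = y - x" using True by simp
    ultimately show ?thesis using *[OF True] by simp
  next
    case False
    then have "\<bar>x - y\<bar> = x - y" by simp
    then show ?thesis using *[of y x] False by simp
  qed
qed

lemma I_cont: "continuous_on UNIV I"
proof -
  have "C \<ge> 0" using gb[of 0] by auto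
  then have "C-lipschitz_on UNIV I"
    by (intro lipschitz_onI) (simp_all only: dist_real_def I_lip)
  then show ?thesis by (rule lipschitz_on_continuous_on)
qed

lemma I_bound: "\<bar>I x\<bar> \<le> C * \<bar>x - 1\<bar>"
  using I_lip[of x 1] I_small[of 1] by simp

lemma Uop_eq: "Uop g x = I x / x"
  unfolding Uop_def I_def by (subst bb_integral_eq[where B=C]) (auto simp: gb)

definition "F x = I x / x"

lemma F_small: "x \<le> 1 \<Longrightarrow> F x = 0"
  unfolding F_def using I_small by simp

lemma F_bound: "\<bar>F x\<bar> \<le> C"
proof (cases "x \<le> 1")
  case True then show ?thesis using F_small C_nonneg by simp
next
  case False
  then have "\<bar>I x\<bar> \<le> C * x" using I_bound[of x] C_nonneg
    by (smt (verit, best) mult_left_mono)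
  then show ?thesis using False unfolding F_def by (simp add: abs_divide divide_le_eq)
qed

lemma F_cont: "continuous_on {0<..} F"
  unfolding F_def[abs_def]
  by (intro continuous_intros continuous_on_subset[OF I_cont]) auto

lemma F_Uop: "Uop g = F"
  using Uop_eq unfolding F_def by auto

lemma inner_eq: "1 \<le> (m::real) \<Longrightarrow> m \<le> y \<Longrightarrow> (\<integral>t. indicator {m..y} t / t\<^sup>2 \<partial>lborel) = 1 / m - 1 / y"
proof -
  assume m: "1 \<le> m" "m \<le> y"
  have "(\<integral>t. (1 / t\<^sup>2) * indicator {m..y} t \<partial>lborel) = (- 1 / y) - (- 1 / m)"
  proof (rule integral_FTC_Icc_real[where F="\<lambda>t. - 1 / t"])
    show "m \<le> y" using m by simp
    fix t assume t: "m \<le> t" "t \<le> y"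
    then have "t \<noteq> 0" using m by auto
    then show "DERIV (\<lambda>t. - 1 / t) t :> 1 / t\<^sup>2"
      by (auto intro!: derivative_eq_intros simp: power2_eq_square field_simps)
    show "isCont (\<lambda>t. 1 / t\<^sup>2) t" using \<open>t \<noteq> 0\<close> by (intro continuous_intros) auto
  qed
  then show ?thesis by simp
qed

lemma fubini_key:
  assumes xy: "1 \<le> x" "x \<le> y"
  shows "integral {x..y} (\<lambda>t. I t / t\<^sup>2) = integral {1..y} (\<lambda>s. g s * (1 / max x s - 1 / y))"
proof -
  define K where "K s t = (if x \<le> t \<and> t \<le> y \<and> 1 \<le> s \<and> s \<le> t then g s / t\<^sup>2 else 0)" for s t :: real
  have Km[measurable]: "(\<lambda>(s, t). K s t) \<in> borel_measurable (lborel \<Otimes>\<^sub>M lborel)"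
    unfolding K_def by measurable
  have Kint: "integrable (lborel \<Otimes>\<^sub>M lborel) (\<lambda>(s, t). K s t)"
  proof (rule Bochner_Integration.integrable_bound)
    show "integrable (lborel \<Otimes>\<^sub>M lborel) (\<lambda>p. C * indicator ({1..y} \<times> {x..y}) p :: real)"
      by (intro integrable_mult_right integrable_real_indicator)
         (auto simp: lborel.emeasure_pair_measure_Times ennreal_mult_less_top emeasure_lborel_Icc_eq)
    show "(\<lambda>(s, t). K s t) \<in> borel_measurable (lborel \<Otimes>\<^sub>M lborel)" by (rule Km)
    show "AE p in lborel \<Otimes>\<^sub>M lborel. norm ((\<lambda>(s, t). K s t) p) \<le> norm (C * indicator ({1..y} \<times> {x..y}) p :: real)"
    proof (rule AE_I2, clarify)
      fix s t
      show "norm (K s t) \<le> norm (C * indicator ({1..y} \<times> {x..y}) (s, t) :: real)"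
      proof (cases "x \<le> t \<and> t \<le> y \<and> 1 \<le> s \<and> s \<le> t")
        case True
        then have "1 \<le> t\<^sup>2" using xy by (simp add: one_le_power)
        then have "\<bar>g s\<bar> / t\<^sup>2 \<le> C / 1"
          by (rule frac_le[OF C_nonneg gb zero_less_one])
        then show ?thesis using True C_nonneg by (simp add: K_def indicator_def abs_divide)
      next
        case False then show ?thesis using C_nonneg by (auto simp: K_def indicator_def)
      qed
    qed
  qed
  have Im: "I \<in> borel_measurable borel"
    by (rule borel_measurable_continuous_onI[OF I_cont])
  have inner1: "(\<integral>s. K s t \<partial>lborel) = indicator {x..y} t * (I t / t\<^sup>2)" for t
  proof -
    have "(\<integral>s. K s t \<partial>lborel) = (\<integral>s. (indicator {x..y} t / t\<^sup>2) * (indicator {1..t} s * g s) \<partial>lborel)"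
      by (rule Bochner_Integration.integral_cong) (auto simp: K_def indicator_def)
    also have "\<dots> = (indicator {x..y} t / t\<^sup>2) * (\<integral>s. indicator {1..t} s * g s \<partial>lborel)"
      by (rule integral_mult_right_zero)
    also have "(\<integral>s. indicator {1..t} s * g s \<partial>lborel) = I t"
      unfolding I_def by (rule lb_eq[where B=C]) (auto simp: gb)
    finally show ?thesis by simp
  qed
  have L: "integral {x..y} (\<lambda>t. I t / t\<^sup>2) = (\<integral>t. (\<integral>s. K s t \<partial>lborel) \<partial>lborel)"
    unfolding inner1
  proof (rule lb_eq[symmetric, where B=C])
    show "(\<lambda>t. I t / t\<^sup>2) \<in> borel_measurable borel" using Im by measurable
    fix t assume t: "t \<in> {x..y}"
    then have t1: "1 \<le> t" using xy by auto
    have "\<bar>I t\<bar> \<le> C * t" using I_bound[of t] t1 C_nonneg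
      by (smt (verit, best) mult_left_mono)
    also have "\<dots> \<le> C * t\<^sup>2" using t1 C_nonneg
      by (intro mult_left_mono) (auto simp: power2_eq_square)
    finally show "\<bar>I t / t\<^sup>2\<bar> \<le> C" using t1 by (simp add: abs_divide divide_le_eq)
  qed
  have inner2: "(\<integral>t. K s t \<partial>lborel) = indicator {1..y} s * (g s * (1 / max x s - 1 / y))" for s
  proof (cases "s \<in> {1..y}")
    case True
    have "(\<integral>t. K s t \<partial>lborel) = (\<integral>t. g s * (indicator {max x s..y} t / t\<^sup>2) \<partial>lborel)"
      by (rule Bochner_Integration.integral_cong) (use True xy in \<open>auto simp: K_def indicator_def\<close>)
    also have "\<dots> = g s * (\<integral>t. indicator {max x s..y} t / t\<^sup>2 \<partial>lborel)"
      by (rule integral_mult_right_zero)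
    also have "(\<integral>t. indicator {max x s..y} t / t\<^sup>2 \<partial>lborel) = 1 / max x s - 1 / y"
      by (rule inner_eq) (use True xy in auto)
    finally show ?thesis using True by simp
  next
    case False
    have "K s = (\<lambda>t. 0)"
      by (rule ext) (use False in \<open>auto simp: K_def\<close>)
    then show ?thesis using False by simp
  qed
  have R: "integral {1..y} (\<lambda>s. g s * (1 / max x s - 1 / y)) = (\<integral>s. (\<integral>t. K s t \<partial>lborel) \<partial>lborel)"
    unfolding inner2
  proof (rule lb_eq[symmetric, where B=C])
    show "(\<lambda>s. g s * (1 / max x s - 1 / y)) \<in> borel_measurable borel" by measurable
    fix s assume s: "s \<in> {1..y}"
    have m1: "1 \<le> max x s" and my: "max x s \<le> y" using s xy by auto
    have "1 / y \<le> 1 / max x s" by (rule frac_le) (use m1 my in auto)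
    moreover have "1 / max x s \<le> 1" using m1 by simp
    moreover have "0 < y" using m1 my by linarith
    then have "0 < 1 / y" by simp
    ultimately have "\<bar>1 / max x s - 1 / y\<bar> \<le> 1" by linarith
    then have "\<bar>g s\<bar> * \<bar>1 / max x s - 1 / y\<bar> \<le> C * 1"
      by (intro mult_mono gb C_nonneg) auto
    then show "\<bar>g s * (1 / max x s - 1 / y)\<bar> \<le> C" by (simp add: abs_mult)
  qed
  show ?thesis unfolding L R by (rule lborel_pair.Fubini_integral[OF Kint])
qed

lemma I_meas[measurable]: "I \<in> borel_measurable borel"
  by (rule borel_measurable_continuous_onI[OF I_cont])

lemma F_meas[measurable]: "F \<in> borel_measurable borel"
  unfolding F_def[abs_def] by measurable

lemma Ftint: assumes "1 \<le> a" shows "(\<lambda>t. F t / t) integrable_on {a..b}"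
proof (rule bb_integrable_on[where B=C])
  show "(\<lambda>t. F t / t) \<in> borel_measurable borel" by measurable
  fix t assume "t \<in> {a..b}"
  then have "1 \<le> t" using assms by auto
  then have "\<bar>F t\<bar> / \<bar>t\<bar> \<le> C / 1" by (intro frac_le C_nonneg F_bound) auto
  then show "\<bar>F t / t\<bar> \<le> C" by (simp add: abs_divide)
qed

lemma key1:
  assumes xy: "1 \<le> x" "x \<le> y"
  shows "integral {x..y} (\<lambda>t. g t / t) - integral {x..y} (\<lambda>t. F t / t) = F y - F x"
proof -
  define h where "h s = g s * (1 / max x s - 1 / y)" for s
  have hint: "h integrable_on {a..b}" for a b
  proof (rule bb_integrable_on[where B="C * (1 / x + 1 / y)"])
    show "h \<in> borel_measurable borel" unfolding h_def by measurable
    fix s :: real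
    have "1 / max x s \<le> 1 / x" by (rule frac_le) (use xy in auto)
    moreover have "0 \<le> 1 / max x s" "0 \<le> 1 / y" using xy by auto
    ultimately have "\<bar>1 / max x s - 1 / y\<bar> \<le> 1 / x + 1 / y" by linarith
    then have "\<bar>g s\<bar> * \<bar>1 / max x s - 1 / y\<bar> \<le> C * (1 / x + 1 / y)"
      by (intro mult_mono gb C_nonneg) auto
    then show "\<bar>h s\<bar> \<le> C * (1 / x + 1 / y)" by (simp add: h_def abs_mult)
  qed
  have "integral {x..y} (\<lambda>t. F t / t) = integral {x..y} (\<lambda>t. I t / t\<^sup>2)"
    by (rule integral_cong) (simp add: F_def power2_eq_square)
  also have "\<dots> = integral {1..y} h" unfolding h_def by (rule fubini_key[OF xy])
  also have "\<dots> = integral {1..x} h + integral {x..y} h"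
    using Henstock_Kurzweil_Integration.integral_combine[OF xy hint] by simp
  also have "integral {1..x} h = integral {1..x} (\<lambda>s. g s * (1 / x - 1 / y))"
    by (rule integral_cong) (auto simp: h_def max_def)
  also have "\<dots> = I x * (1 / x - 1 / y)" unfolding I_def by simp
  also have "integral {x..y} h = integral {x..y} (\<lambda>s. g s / s - g s * (1 / y))"
    by (rule integral_cong) (auto simp: h_def max_def algebra_simps)
  also have "\<dots> = integral {x..y} (\<lambda>s. g s / s) - integral {x..y} g * (1 / y)"
    using gtint[of x y] gint[of x y] xy by (subst integral_diff) auto
  also have "integral {x..y} g = I y - I x" using I_diff[OF xy] by simp
  finally have E: "integral {x..y} (\<lambda>t. F t / t) =
      I x * (1 / x - 1 / y) + (integral {x..y} (\<lambda>s. g s / s) - (I y - I x) * (1 / y))" .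
  have Fx: "F x = I x / x" and Fy: "F y = I y / y" by (simp_all add: F_def)
  have "x > 0" "y > 0" using xy by auto
  then show ?thesis unfolding E Fx Fy by (simp add: field_simps)
qed

lemma wint:
  assumes xy: "1 \<le> x" "x \<le> y"
  shows "integral\<^sup>L (lebesgue_on {x..y}) (\<lambda>t. (g t - F t) / t) = F y - F x"
proof -
  have "integral\<^sup>L (lebesgue_on {x..y}) (\<lambda>t. (g t - F t) / t) = integral {x..y} (\<lambda>t. (g t - F t) / t)"
  proof (rule bb_integral_eq[where B="2 * C"])
    show "(\<lambda>t. (g t - F t) / t) \<in> borel_measurable borel" by measurable
    fix t assume "t \<in> {x..y}"
    then have "1 \<le> t" using xy by auto
    have "\<bar>g t - F t\<bar> \<le> 2 * C" using gb[of t] F_bound[of t] by linarith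
    then have "\<bar>g t - F t\<bar> / \<bar>t\<bar> \<le> (2 * C) / 1"
      by (intro frac_le) (use C_nonneg \<open>1 \<le> t\<close> in auto)
    then show "\<bar>(g t - F t) / t\<bar> \<le> 2 * C" by (simp add: abs_divide)
  qed
  also have "\<dots> = integral {x..y} (\<lambda>t. g t / t - F t / t)"
    by (simp add: diff_divide_distrib)
  also have "\<dots> = integral {x..y} (\<lambda>t. g t / t) - integral {x..y} (\<lambda>t. F t / t)"
    by (rule integral_diff[OF gtint Ftint]) (use xy in auto)
  also have "\<dots> = F y - F x" by (rule key1[OF xy])
  finally show ?thesis .
qed

lemma Lbar1_w: "Lbar1 (\<lambda>x. g x - F x) = 0"
  unfolding Lbar1_def
proof (rule Lim_zero[where B="2 * C"])
  fix \<theta> x :: real assume \<theta>: "\<theta> > 1" and x: "x \<ge> 1"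
  have "x \<le> \<theta> * x" using \<theta> x by simp
  from wint[OF x this] have "\<bar>integral\<^sup>L (lebesgue_on {x..\<theta> * x}) (\<lambda>t. (g t - F t) / t)\<bar> \<le> 2 * C"
    using F_bound[of x] F_bound[of "\<theta> * x"] by linarith
  moreover have "ln \<theta> > 0" using \<theta> by simp
  ultimately show "\<bar>1 / ln \<theta> * integral\<^sup>L (lebesgue_on {x..\<theta> * x}) (\<lambda>t. (g t - F t) / t)\<bar> \<le> 2 * C / ln \<theta>"
    by (simp add: abs_mult divide_right_mono)
qed

lemma Lbar1_w': "Lbar1 (\<lambda>x. F x - g x) = 0"
  unfolding Lbar1_def
proof (rule Lim_zero[where B="2 * C"])
  fix \<theta> x :: real assume \<theta>: "\<theta> > 1" and x: "x \<ge> 1"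
  have "x \<le> \<theta> * x" using \<theta> x by simp
  have "integral\<^sup>L (lebesgue_on {x..\<theta> * x}) (\<lambda>t. (F t - g t) / t) =
        - integral\<^sup>L (lebesgue_on {x..\<theta> * x}) (\<lambda>t. (g t - F t) / t)"
    by (subst integral_minus[symmetric]) (simp add: minus_divide_left)
  with wint[OF x \<open>x \<le> \<theta> * x\<close>] have "\<bar>integral\<^sup>L (lebesgue_on {x..\<theta> * x}) (\<lambda>t. (F t - g t) / t)\<bar> \<le> 2 * C"
    using F_bound[of x] F_bound[of "\<theta> * x"] by linarith
  moreover have "ln \<theta> > 0" using \<theta> by simp
  ultimately show "\<bar>1 / ln \<theta> * integral\<^sup>L (lebesgue_on {x..\<theta> * x}) (\<lambda>t. (F t - g t) / t)\<bar> \<le> 2 * C / ln \<theta>"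
    by (simp add: abs_mult divide_right_mono)
qed

definition "Q \<theta> x = integral {x..\<theta> * x} (\<lambda>t. g t / t)"

lemma Qb:
  assumes x: "1 \<le> x" and th: "1 \<le> \<theta>"
  shows "\<bar>Q \<theta> x\<bar> \<le> C * ln \<theta>"
proof -
  have xt: "x \<le> \<theta> * x" using x th by simp
  have hi: "((\<lambda>t. C / t) has_integral (C * ln (\<theta> * x) - C * ln x)) {x..\<theta> * x}"
  proof (rule fundamental_theorem_of_calculus[OF xt])
    fix t assume "t \<in> {x..\<theta> * x}"
    then have "t > 0" using x by auto
    then show "((\<lambda>t. C * ln t) has_vector_derivative C / t) (at t within {x..\<theta> * x})"
      unfolding has_real_derivative_iff_has_vector_derivative[symmetric]
      by (auto intro!: derivative_eq_intros)
  qed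
  have lnq: "C * ln (\<theta> * x) - C * ln x = C * ln \<theta>" using x th by (simp add: ln_mult algebra_simps)
  have ci: "(\<lambda>t. C / t) integrable_on {x..\<theta> * x}" using hi by blast
  have ci': "(\<lambda>t. - (C / t)) integrable_on {x..\<theta> * x}" using integrable_neg[OF ci] by simp
  have gi: "(\<lambda>t. g t / t) integrable_on {x..\<theta> * x}" using gtint[of x] x by simp
  have pt: "\<bar>g t / t\<bar> \<le> C / t" if "t \<in> {x..\<theta> * x}" for t
  proof -
    have "t > 0" using that x by auto
    then show ?thesis using gb[of t] by (simp add: abs_divide divide_right_mono)
  qed
  have "integral {x..\<theta> * x} (\<lambda>t. g t / t) \<le> integral {x..\<theta> * x} (\<lambda>t. C / t)"
  proof (rule integral_le[OF gi ci])
    fix t assume "t \<in> {x..\<theta> * x}" from pt[OF this] show "g t / t \<le> C / t" unfolding abs_le_iff by linarith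
  qed
  moreover have "integral {x..\<theta> * x} (\<lambda>t. - (C / t)) \<le> integral {x..\<theta> * x} (\<lambda>t. g t / t)"
  proof (rule integral_le[OF ci' gi])
    fix t assume "t \<in> {x..\<theta> * x}" from pt[OF this] show "- (C / t) \<le> g t / t" unfolding abs_le_iff by linarith
  qed
  moreover have "integral {x..\<theta> * x} (\<lambda>t. C / t) = C * ln \<theta>"
    using integral_unique[OF hi] lnq by simp
  ultimately show ?thesis unfolding Q_def by (simp add: abs_le_iff)
qed

lemma Qadd:
  assumes x: "1 \<le> x" and a: "1 \<le> a" and b: "1 \<le> b"
  shows "Q (a * b) x = Q a x + Q b (a * x)"
proof -
  have "x \<le> a * x" "a * x \<le> a * b * x" using x a b by (auto simp: mult_le_cancel_right1)
  from Henstock_Kurzweil_Integration.integral_combine[OF this gtint]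
  show ?thesis unfolding Q_def using x by (simp add: mult_ac)
qed

definition "\<sigma> \<theta> = real_of_ereal (Limsup at_top (\<lambda>x. ereal (Q \<theta> x)))"

lemma LS_bounds:
  assumes th: "1 \<le> \<theta>"
  shows "Limsup at_top (\<lambda>x. ereal (Q \<theta> x)) \<le> ereal (C * ln \<theta>)"
    and "ereal (- (C * ln \<theta>)) \<le> Limsup at_top (\<lambda>x. ereal (Q \<theta> x))"
proof -
  show "Limsup at_top (\<lambda>x. ereal (Q \<theta> x)) \<le> ereal (C * ln \<theta>)"
    by (rule Limsup_bounded)
       (use eventually_ge_at_top[of "1::real"] in \<open>eventually_elim, use Qb th in \<open>auto simp: abs_le_iff\<close>\<close>)
  show "ereal (- (C * ln \<theta>)) \<le> Limsup at_top (\<lambda>x. ereal (Q \<theta> x))"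
  proof (rule le_Limsup)
    show "(at_top :: real filter) \<noteq> bot" by simp
    show "\<forall>\<^sub>F x in at_top. ereal (- (C * ln \<theta>)) \<le> ereal (Q \<theta> x)"
      using eventually_ge_at_top[of "1::real"]
    proof eventually_elim
      case (elim x) from Qb[OF elim th] show ?case by (simp add: abs_le_iff)
    qed
  qed
qed

lemma LS_eq: "1 \<le> \<theta> \<Longrightarrow> Limsup at_top (\<lambda>x. ereal (Q \<theta> x)) = ereal (\<sigma> \<theta>)"
  unfolding \<sigma>_def using LS_bounds[of \<theta>]
  by (intro ereal_real'[symmetric]) auto

lemma \<sigma>_bound: "1 \<le> \<theta> \<Longrightarrow> \<bar>\<sigma> \<theta>\<bar> \<le> C * ln \<theta>"
  using LS_bounds[of \<theta>] LS_eq[of \<theta>] by (auto simp: abs_le_iff)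

lemma \<sigma>1:
  assumes "1 \<le> \<theta>" "c > \<sigma> \<theta>"
  shows "\<forall>\<^sub>F x in at_top. Q \<theta> x < c"
proof -
  have "ereal c > Limsup at_top (\<lambda>x. ereal (Q \<theta> x))" using LS_eq[OF assms(1)] assms(2) by simp
  from Limsup_lessD[OF this] show ?thesis by (rule eventually_mono) simp
qed

lemma \<sigma>2:
  assumes "1 \<le> \<theta>" "\<forall>\<^sub>F x in at_top. Q \<theta> x \<le> c"
  shows "\<sigma> \<theta> \<le> c"
proof -
  have "Limsup at_top (\<lambda>x. ereal (Q \<theta> x)) \<le> ereal c"
    by (rule Limsup_bounded) (use assms(2) in \<open>rule eventually_mono, simp\<close>)
  then show ?thesis using LS_eq[OF assms(1)] by simp
qed

lemma \<sigma>_sub: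
  assumes a: "1 \<le> a" and b: "1 \<le> b"
  shows "\<sigma> (a * b) \<le> \<sigma> a + \<sigma> b"
proof (rule field_le_epsilon)
  fix e :: real assume e: "0 < e"
  have ab: "1 \<le> a * b" using a b by (metis mult_mono' mult_1 zero_le_one)
  have ev1: "\<forall>\<^sub>F x in at_top. Q a x < \<sigma> a + e / 2" by (rule \<sigma>1[OF a]) (use e in simp)
  have ev2': "\<forall>\<^sub>F y in at_top. Q b y < \<sigma> b + e / 2" by (rule \<sigma>1[OF b]) (use e in simp)
  have lim: "filterlim (\<lambda>x. a * x) at_top at_top"
    using a by (intro filterlim_tendsto_pos_mult_at_top[OF tendsto_const]) (auto intro: filterlim_ident)
  have ev2: "\<forall>\<^sub>F x in at_top. Q b (a * x) < \<sigma> b + e / 2"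
    using filterlim_iff[THEN iffD1, OF lim] ev2' by blast
  have "\<forall>\<^sub>F x in at_top. Q (a * b) x \<le> \<sigma> a + \<sigma> b + e"
    using ev1 ev2 eventually_ge_at_top[of "1::real"]
  proof eventually_elim
    case (elim x) then show ?case using Qadd[OF elim(3) a b] by simp
  qed
  then show "\<sigma> (a * b) \<le> \<sigma> a + \<sigma> b + e" by (rule \<sigma>2[OF ab])
qed

lemma \<sigma>_lim: "\<exists>m. ((\<lambda>\<theta>. \<sigma> \<theta> / ln \<theta>) \<longlongrightarrow> m) at_top"
proof -
  define \<phi> where "\<phi> u = \<sigma> (exp u)" for u
  have "\<exists>m. ((\<lambda>u. \<phi> u / u) \<longlongrightarrow> m) at_top"
  proof (rule fekete)
    fix a b :: real assume "0 \<le> a" "0 \<le> b"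
    then have "1 \<le> exp a" "1 \<le> exp b" by auto
    from \<sigma>_sub[OF this] show "\<phi> (a + b) \<le> \<phi> a + \<phi> b" by (simp add: \<phi>_def exp_add)
  next
    fix a :: real assume "0 \<le> a"
    then show "\<bar>\<phi> a\<bar> \<le> C * a" using \<sigma>_bound[of "exp a"] by (simp add: \<phi>_def)
  qed
  then obtain m where m: "((\<lambda>u. \<phi> u / u) \<longlongrightarrow> m) at_top" by blast
  have lim1: "((\<lambda>\<theta>. \<phi> (ln \<theta>) / ln \<theta>) \<longlongrightarrow> m) at_top"
    by (rule filterlim_compose[OF m ln_at_top])
  have ev: "\<forall>\<^sub>F \<theta> in at_top. \<phi> (ln \<theta>) / ln \<theta> = \<sigma> \<theta> / ln \<theta>"
    using eventually_gt_at_top[of "0::real"] by eventually_elim (simp add: \<phi>_def)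
  have "((\<lambda>\<theta>. \<sigma> \<theta> / ln \<theta>) \<longlongrightarrow> m) at_top" using lim1 unfolding tendsto_cong[OF ev] .
  then show ?thesis by (rule exI)
qed

lemma conv_g: "1 \<le> x \<Longrightarrow> integral\<^sup>L (lebesgue_on {x..y}) (\<lambda>t. g t / t) = integral {x..y} (\<lambda>t. g t / t)"
proof (rule bb_integral_eq[where B=C])
  show "(\<lambda>t. g t / t) \<in> borel_measurable borel" by measurable
  fix t assume "1 \<le> x" "t \<in> {x..y}"
  then have "1 \<le> t" by auto
  then have "\<bar>g t\<bar> / \<bar>t\<bar> \<le> C / 1" by (intro frac_le C_nonneg gb) auto
  then show "\<bar>g t / t\<bar> \<le> C" by (simp add: abs_divide)
qed

lemma Lbar1_g:
  assumes m: "((\<lambda>\<theta>. \<sigma> \<theta> / ln \<theta>) \<longlongrightarrow> m) at_top"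
  shows "Lbar1 g = ereal m"
  unfolding Lbar1_def
proof (rule tendsto_Lim)
  show "\<not> trivial_limit (at_top :: real filter)" by simp
  have ev: "\<forall>\<^sub>F \<theta> in at_top. ereal (\<sigma> \<theta> / ln \<theta>) =
      Limsup at_top (\<lambda>x. ereal (1 / ln \<theta> * integral\<^sup>L (lebesgue_on {x..\<theta> * x}) (\<lambda>t. g t / t)))"
    using eventually_ge_at_top[of "1::real"]
  proof eventually_elim
    case (elim \<theta>)
    have "\<forall>\<^sub>F x in at_top. ereal (1 / ln \<theta> * integral\<^sup>L (lebesgue_on {x..\<theta> * x}) (\<lambda>t. g t / t)) =
        ereal (1 / ln \<theta>) * ereal (Q \<theta> x)"
      using eventually_ge_at_top[of "1::real"]
      by eventually_elim (simp add: conv_g Q_def)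
    then have "Limsup at_top (\<lambda>x. ereal (1 / ln \<theta> * integral\<^sup>L (lebesgue_on {x..\<theta> * x}) (\<lambda>t. g t / t))) =
        Limsup at_top (\<lambda>x. ereal (1 / ln \<theta>) * ereal (Q \<theta> x))"
      by (rule Limsup_eq)
    also have "\<dots> = ereal (1 / ln \<theta>) * Limsup at_top (\<lambda>x. ereal (Q \<theta> x))"
      by (rule Limsup_ereal_mult_left) (use elim in auto)
    also have "\<dots> = ereal (\<sigma> \<theta> / ln \<theta>)" using LS_eq[OF elim] by simp
    finally show ?case by simp
  qed
  have limE: "((\<lambda>\<theta>. ereal (\<sigma> \<theta> / ln \<theta>)) \<longlongrightarrow> ereal m) at_top"
    using m by (rule tendsto_ereal)
  show "((\<lambda>\<theta>. Limsup at_top (\<lambda>x. ereal (1 / ln \<theta> * integral\<^sup>L (lebesgue_on {x..\<theta> * x}) (\<lambda>t. g t / t)))) \<longlongrightarrow> ereal m) at_top"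
    using limE unfolding tendsto_cong[OF ev] .
qed

end

lemma Linf_cong: "f \<in> Linf \<Longrightarrow> (\<And>x. x \<ge> 1 \<Longrightarrow> f x = g x) \<Longrightarrow> g \<in> Linf"
proof -
  assume f: "f \<in> Linf" and eq: "\<And>x. x \<ge> 1 \<Longrightarrow> f x = g x"
  then obtain B where m: "f \<in> borel_measurable Rplus" and B: "AE x in Rplus. \<bar>f x\<bar> \<le> B"
    by (auto simp: Linf_def)
  have "g \<in> borel_measurable Rplus"
    using m by (subst measurable_cong[where g=f]) (auto simp: space_restrict_space eq)
  moreover have "AE x in Rplus. \<bar>g x\<bar> \<le> B"
  proof -
    have "AE x in Rplus. f x = g x" by (rule AE_Rplus) (rule eq)
    with B show ?thesis by eventually_elim auto
  qed
  ultimately show ?thesis by (auto simp: Linf_def)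
qed

locale imean = mean +
  assumes inv: "\<And>h. h \<in> Linf \<Longrightarrow> \<psi> (Uop h) = \<psi> h"
begin

lemma inv_x: "\<psi> (\<lambda>x. 1 / x) = 0"
proof -
  have U1: "Uop (\<lambda>_. 1) x = 1 - 1 / x" if "x \<ge> 1" for x
  proof -
    have "integral\<^sup>L (lebesgue_on {1..x}) (\<lambda>_. 1::real) = integral {1..x} (\<lambda>_. 1::real)"
      by (rule bb_integral_eq[where B=1]) auto
    also have "\<dots> = x - 1" using that by simp
    finally show ?thesis using that unfolding Uop_def by (simp add: field_simps)
  qed
  have L1: "(\<lambda>x. 1 - 1 / x) \<in> Linf" using Linf_diff[OF Linf_const Linf_inv] .
  have "\<psi> (Uop (\<lambda>_. 1)) = 1" using inv[OF Linf_const] one by simp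
  moreover have "\<psi> (Uop (\<lambda>_. 1)) = \<psi> (\<lambda>x. 1 - 1 / x)"
    by (rule cong[OF Linf_cong[OF L1] L1]) (use U1 in auto)
  moreover have "\<psi> (\<lambda>x. 1 - 1 / x) = 1 - \<psi> (\<lambda>x. 1 / x)"
    using diff[OF Linf_const Linf_inv] one by simp
  ultimately show ?thesis by simp
qed

lemma ev_bound:
  assumes G: "G \<in> Linf" and M: "\<And>x. x \<ge> 1 \<Longrightarrow> \<bar>G x\<bar> \<le> M" and X: "X \<ge> 1"
    and c: "\<And>x. x \<ge> X \<Longrightarrow> G x \<le> c"
  shows "\<psi> G \<le> c"
proof -
  define K where "K = (M + \<bar>c\<bar>) * X"
  have W: "(\<lambda>x. c + K * (1 / x)) \<in> Linf" by (intro Linf_add Linf_const Linf_cmult Linf_inv)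
  have M0: "M \<ge> 0" using M[of 1] by simp
  have "\<psi> G \<le> \<psi> (\<lambda>x. c + K * (1 / x))"
  proof (rule mono[OF G W])
    fix x :: real assume x: "x \<ge> 1"
    show "G x \<le> c + K * (1 / x)"
    proof (cases "x \<ge> X")
      case True
      have "0 \<le> K * (1 / x)" using M0 X x by (simp add: K_def)
      then show ?thesis using c[OF True] by simp
    next
      case False
      have "K * (1 / x) = (M + \<bar>c\<bar>) * (X / x)" by (simp add: K_def)
      moreover have "X / x \<ge> 1" using False x by simp
      ultimately have "K * (1 / x) \<ge> (M + \<bar>c\<bar>) * 1"
        by (metis M0 abs_ge_zero add_nonneg_nonneg mult_left_mono)
      then show ?thesis using M[OF x] by (simp add: abs_le_iff) linarith
    qed
  qed
  also have "\<dots> = c" using add[OF Linf_const Linf_cmult[OF Linf_inv]] cmult[OF Linf_inv] inv_x const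
    by simp
  finally show ?thesis .
qed

end

lemma deriv_int:
  fixes q :: "real \<Rightarrow> real"
  assumes q: "continuous_on {0<..} q" and y: "y > 1 / 2"
  shows "((\<lambda>u. integral {1/2..u} q) has_real_derivative q y) (at y)"
proof -
  have c: "continuous_on {1/2..y+1} q" by (rule continuous_on_subset[OF q]) auto
  have "((\<lambda>u. integral {1/2..u} q) has_real_derivative q y) (at y within {1/2..y+1})"
    by (rule integral_has_real_derivative[OF c]) (use y in auto)
  moreover have "at y within {1/2..y+1} = at y"
    by (rule at_within_interior) (use y in \<open>auto simp: interior_atLeastAtMost_real\<close>)
  ultimately show ?thesis by simp
qed

locale smooth =
  fixes \<Phi> :: "real \<Rightarrow> real" and C \<theta> :: real
  assumes \<Phi>c: "continuous_on {0<..} \<Phi>" and \<Phi>b: "\<And>x. \<bar>\<Phi> x\<bar> \<le> C" and \<theta>: "\<theta> > 1"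
begin

definition "q1 t = \<Phi> t / t"
definition "q2 t = ln t * \<Phi> t / t"
definition "P1 y = integral {1/2..y} q1"
definition "P2 y = integral {1/2..y} q2"
definition "D x = P1 (\<theta> * x) - P1 x"
definition "E x = P2 (\<theta> * x) - P2 x"
definition "B x = D x / (ln \<theta>)"
definition "H x = D x - (E x - ln x * D x) / (ln \<theta>)"
definition "G x = H x + B x - \<Phi> x"

lemma L_pos: "(ln \<theta>) > 0" using \<theta> by simp

lemma L_ne: "(ln \<theta>) \<noteq> 0" using L_pos by simp

lemma C_nonneg: "0 \<le> C" using \<Phi>b[of 0] by linarith

lemma q1c: "continuous_on {0<..} q1"
  unfolding q1_def[abs_def] by (intro continuous_intros \<Phi>c) auto

lemma q2c: "continuous_on {0<..} q2"
  unfolding q2_def[abs_def] by (intro continuous_intros \<Phi>c) auto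

lemma dP1: "y > 1/2 \<Longrightarrow> (P1 has_real_derivative q1 y) (at y)"
  unfolding P1_def[abs_def] by (rule deriv_int[OF q1c])

lemma dP2: "y > 1/2 \<Longrightarrow> (P2 has_real_derivative q2 y) (at y)"
  unfolding P2_def[abs_def] by (rule deriv_int[OF q2c])

lemma dP1\<theta>: "x > 1/2 \<Longrightarrow> ((\<lambda>x. P1 (\<theta> * x)) has_real_derivative q1 (\<theta> * x) * \<theta>) (at x)"
proof -
  assume x: "x > 1/2"
  have "x \<le> \<theta> * x" using x \<theta> by simp
  then have "\<theta> * x > 1/2" using x by linarith
  from DERIV_chain2[OF dP1[OF this] DERIV_cmult_Id[of \<theta> x UNIV]]
  show ?thesis by simp
qed

lemma dP2\<theta>: "x > 1/2 \<Longrightarrow> ((\<lambda>x. P2 (\<theta> * x)) has_real_derivative q2 (\<theta> * x) * \<theta>) (at x)"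
proof -
  assume x: "x > 1/2"
  have "x \<le> \<theta> * x" using x \<theta> by simp
  then have "\<theta> * x > 1/2" using x by linarith
  from DERIV_chain2[OF dP2[OF this] DERIV_cmult_Id[of \<theta> x UNIV]]
  show ?thesis by simp
qed

lemma dD: "x > 1/2 \<Longrightarrow> (D has_real_derivative (q1 (\<theta> * x) * \<theta> - q1 x)) (at x)"
  unfolding D_def[abs_def] by (rule DERIV_diff[OF dP1\<theta> dP1]) auto

lemma dE: "x > 1/2 \<Longrightarrow> (E has_real_derivative (q2 (\<theta> * x) * \<theta> - q2 x)) (at x)"
  unfolding E_def[abs_def] by (rule DERIV_diff[OF dP2\<theta> dP2]) auto

lemma dxH:
  assumes x: "x > 1/2"
  shows "((\<lambda>x. x * H x) has_real_derivative G x) (at x)"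
proof -
  have xp: "x > 0" using x by simp
  define dD' where "dD' = q1 (\<theta> * x) * \<theta> - q1 x"
  define dE' where "dE' = q2 (\<theta> * x) * \<theta> - q2 x"
  have dln: "(ln has_real_derivative inverse x) (at x)" by (rule DERIV_ln[OF xp])
  have dlnD: "((\<lambda>x. ln x * D x) has_real_derivative (inverse x * D x + dD' * ln x)) (at x)"
    unfolding dD'_def by (rule DERIV_mult[OF dln dD[OF x]])
  have dEm: "((\<lambda>x. E x - ln x * D x) has_real_derivative (dE' - (inverse x * D x + dD' * ln x))) (at x)"
    unfolding dE'_def by (rule DERIV_diff[OF dE[OF x] dlnD])
  have dH: "(H has_real_derivative (dD' - (dE' - (inverse x * D x + dD' * ln x)) / (ln \<theta>))) (at x)"
    unfolding H_def[abs_def] dD'_def by (rule DERIV_diff[OF dD[OF x] DERIV_cdivide[OF dEm[unfolded dD'_def]]])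
  have dxH: "((\<lambda>x. x * H x) has_real_derivative (1 * H x + (dD' - (dE' - (inverse x * D x + dD' * ln x)) / (ln \<theta>)) * x)) (at x)"
    by (rule DERIV_mult[OF DERIV_ident dH])
  have lnx: "ln (\<theta> * x) = (ln \<theta>) + ln x" using xp \<theta> by (simp add: ln_mult)
  have e1: "dD' = (\<Phi> (\<theta> * x) - \<Phi> x) / x" using xp \<theta>
    by (simp add: dD'_def q1_def divide_simps)
  have e2: "dE' = (((ln \<theta>) + ln x) * \<Phi> (\<theta> * x) - ln x * \<Phi> x) / x" using xp \<theta>
    by (simp add: dE'_def q2_def lnx divide_simps)
  have "1 * H x + (dD' - (dE' - (inverse x * D x + dD' * ln x)) / (ln \<theta>)) * x = G x"
    unfolding e1 e2 G_def B_def using xp L_pos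
    by (simp add: field_simps)
  with dxH show ?thesis by simp
qed

lemma q1int: "1/2 \<le> a \<Longrightarrow> q1 integrable_on {a..b}"
  by (rule integrable_continuous_interval, rule continuous_on_subset[OF q1c]) auto

lemma q2int: "1/2 \<le> a \<Longrightarrow> q2 integrable_on {a..b}"
  by (rule integrable_continuous_interval, rule continuous_on_subset[OF q2c]) auto

lemma x_le: assumes "0 \<le> x" shows "x \<le> \<theta> * x"
proof -
  have "1 * x \<le> \<theta> * x" using \<theta> assms by (intro mult_right_mono) auto
  then show ?thesis by simp
qed

lemma D_int: assumes x: "1 \<le> x" shows "D x = integral {x..\<theta> * x} q1"
proof -
  have "1/2 \<le> x" "x \<le> \<theta> * x" using x x_le[of x] by auto
  from Henstock_Kurzweil_Integration.integral_combine[OF this q1int]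
  show ?thesis unfolding D_def P1_def by simp
qed

lemma E_int: assumes x: "1 \<le> x" shows "E x = integral {x..\<theta> * x} q2"
proof -
  have "1/2 \<le> x" "x \<le> \<theta> * x" using x x_le[of x] by auto
  from Henstock_Kurzweil_Integration.integral_combine[OF this q2int]
  show ?thesis unfolding E_def P2_def by simp
qed

lemma ED_int: assumes x: "1 \<le> x"
  shows "E x - ln x * D x = integral {x..\<theta> * x} (\<lambda>t. (ln t - ln x) * q1 t)"
proof -
  have "integral {x..\<theta> * x} (\<lambda>t. (ln t - ln x) * q1 t) = integral {x..\<theta> * x} (\<lambda>t. q2 t - ln x * q1 t)"
    by (rule integral_cong) (simp add: q1_def q2_def algebra_simps)
  also have "\<dots> = integral {x..\<theta> * x} q2 - integral {x..\<theta> * x} (\<lambda>t. ln x * q1 t)"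
    by (rule integral_diff[OF q2int integrable_on_mult_right[OF q1int]]) (use x in auto)
  also have "integral {x..\<theta> * x} (\<lambda>t. ln x * q1 t) = ln x * integral {x..\<theta> * x} q1"
    by simp
  finally show ?thesis using D_int[OF x] E_int[OF x] by simp
qed

lemma q1_bound: "0 < x \<Longrightarrow> x \<le> t \<Longrightarrow> \<bar>q1 t\<bar> \<le> C / x"
proof -
  assume "0 < x" "x \<le> t"
  then have "\<bar>\<Phi> t\<bar> / \<bar>t\<bar> \<le> C / x" by (intro frac_le C_nonneg \<Phi>b) auto
  then show ?thesis by (simp add: q1_def abs_divide)
qed

lemma D_bound: assumes x: "1 \<le> x" shows "\<bar>D x\<bar> \<le> C * (\<theta> - 1)"
proof -
  have "\<bar>integral {x..\<theta> * x} q1\<bar> \<le> C / x * (\<theta> * x - x)"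
    by (rule integral_abs_bound) (use x q1int q1_bound x_le[of x] in auto)
  also have "C / x * (\<theta> * x - x) = C * (\<theta> - 1)" using x by (simp add: field_simps)
  finally show ?thesis using D_int[OF x] by simp
qed

lemma ED_bound: assumes x: "1 \<le> x" shows "\<bar>E x - ln x * D x\<bar> \<le> (ln \<theta>) * C * (\<theta> - 1)"
proof -
  have "\<bar>integral {x..\<theta> * x} (\<lambda>t. (ln t - ln x) * q1 t)\<bar> \<le> ((ln \<theta>) * (C / x)) * (\<theta> * x - x)"
  proof (rule integral_abs_bound)
    show "(\<lambda>t. (ln t - ln x) * q1 t) integrable_on {x..\<theta> * x}"
      by (rule integrable_continuous_interval)
         (intro continuous_intros continuous_on_subset[OF q1c], use x in auto)
    show "x \<le> \<theta> * x" using x x_le[of x] by simp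
    fix t assume t: "t \<in> {x..\<theta> * x}"
    then have tp: "t > 0" using x by auto
    have "0 \<le> ln t - ln x" using t x by auto
    moreover have "ln t - ln x \<le> (ln \<theta>)"
    proof -
      have "ln t \<le> ln (\<theta> * x)" using t tp by auto
      then show ?thesis using x \<theta> by (simp add: ln_mult)
    qed
    ultimately have "\<bar>ln t - ln x\<bar> \<le> (ln \<theta>)" by simp
    moreover have "\<bar>q1 t\<bar> \<le> C / x" using q1_bound t x by auto
    ultimately have "\<bar>ln t - ln x\<bar> * \<bar>q1 t\<bar> \<le> (ln \<theta>) * (C / x)"
      by (intro mult_mono) (use L_pos in auto)
    then show "\<bar>(ln t - ln x) * q1 t\<bar> \<le> (ln \<theta>) * (C / x)" by (simp add: abs_mult)
  qed
  also have "((ln \<theta>) * (C / x)) * (\<theta> * x - x) = (ln \<theta>) * C * (\<theta> - 1)" using x by (simp add: field_simps)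
  finally show ?thesis using ED_int[OF x] by simp
qed

lemma B_bound: "1 \<le> x \<Longrightarrow> \<bar>B x\<bar> \<le> C * (\<theta> - 1) / (ln \<theta>)"
  using D_bound L_pos by (simp add: B_def abs_divide divide_right_mono)

lemma H_bound: assumes x: "1 \<le> x" shows "\<bar>H x\<bar> \<le> 2 * C * (\<theta> - 1)"
proof -
  have 1: "\<bar>(E x - ln x * D x) / (ln \<theta>)\<bar> \<le> C * (\<theta> - 1)"
    using ED_bound[OF x] L_pos by (simp add: abs_divide divide_le_eq mult_ac)
  have 2: "\<bar>D x - (E x - ln x * D x) / (ln \<theta>)\<bar> \<le> \<bar>D x\<bar> + \<bar>(E x - ln x * D x) / (ln \<theta>)\<bar>"
    by (rule abs_triangle_ineq4)
  have 3: "\<bar>D x\<bar> + \<bar>(E x - ln x * D x) / (ln \<theta>)\<bar> \<le> C * (\<theta> - 1) + C * (\<theta> - 1)"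
    by (rule add_mono[OF D_bound[OF x] 1])
  have "\<bar>H x\<bar> \<le> C * (\<theta> - 1) + C * (\<theta> - 1)" unfolding H_def by (rule order_trans[OF 2 3])
  then show ?thesis by simp
qed

lemma D_cont: "continuous_on {1/2<..} D"
  by (rule continuous_at_imp_continuous_on) (auto intro: DERIV_isCont dD)

lemma E_cont: "continuous_on {1/2<..} E"
  by (rule continuous_at_imp_continuous_on) (auto intro: DERIV_isCont dE)

lemma H_cont: "continuous_on {1..} H"
  unfolding H_def[abs_def]
  by (intro continuous_intros continuous_on_subset[OF D_cont] continuous_on_subset[OF E_cont]) (auto simp: L_ne)

lemma B_cont: "continuous_on {1..} B"
  unfolding B_def[abs_def]
  by (intro continuous_intros continuous_on_subset[OF D_cont]) (auto simp: L_ne)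

lemma \<Phi>_cont1: "continuous_on {1..} \<Phi>"
  by (rule continuous_on_subset[OF \<Phi>c]) auto

lemma G_cont: "continuous_on {1..} G"
  unfolding G_def[abs_def] by (intro continuous_intros H_cont B_cont \<Phi>_cont1)

lemma \<Phi>_Linf: "\<Phi> \<in> Linf" by (rule Linf_cont[OF \<Phi>_cont1 \<Phi>b])
lemma B_Linf: "B \<in> Linf" by (rule Linf_cont[OF B_cont B_bound])
lemma H_Linf: "H \<in> Linf" by (rule Linf_cont[OF H_cont H_bound])
lemma G_Linf: "G \<in> Linf"
proof -
  have "(\<lambda>x. H x + B x - \<Phi> x) \<in> Linf" by (intro Linf_diff Linf_add H_Linf B_Linf \<Phi>_Linf)
  then show ?thesis by (simp add: G_def[abs_def])
qed

lemma G_integral: assumes x: "1 \<le> x" shows "(G has_integral (x * H x - 1 * H 1)) {1..x}"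
proof (rule fundamental_theorem_of_calculus[OF x])
  fix t assume t: "t \<in> {1..x}"
  then have "t > 1/2" by auto
  from dxH[OF this] have "((\<lambda>x. x * H x) has_real_derivative G t) (at t within {1..x})"
    by (rule has_field_derivative_at_within)
  then show "((\<lambda>x. x * H x) has_vector_derivative G t) (at t within {1..x})"
    by (simp add: has_real_derivative_iff_has_vector_derivative)
qed

lemma UG: assumes x: "1 \<le> x" shows "Uop G x = H x - H 1 * (1 / x)"
proof -
  have c: "continuous_on {1..x} G" by (rule continuous_on_subset[OF G_cont]) auto
  have "integral\<^sup>L (lebesgue_on {1..x}) G = integral {1..x} G"
    by (rule lebesgue_integral_eq_integral[OF continuous_imp_integrable_real[OF c]]) simp
  also have "\<dots> = x * H x - H 1" using integral_unique[OF G_integral[OF x]] by simp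
  finally show ?thesis using x unfolding Uop_def by (simp add: field_simps)
qed

end

locale smooth_mean = imean + smooth
begin

lemma B_eq: "\<psi> B = \<psi> \<Phi>"
proof -
  have W: "(\<lambda>x. H x - H 1 * (1 / x)) \<in> Linf" by (intro Linf_diff Linf_cmult H_Linf Linf_inv)
  have "\<psi> G = \<psi> (Uop G)" using inv[OF G_Linf] by simp
  also have "\<dots> = \<psi> (\<lambda>x. H x - H 1 * (1 / x))"
    by (rule cong[OF Linf_cong[OF W] W]) (use UG in auto)
  also have "\<dots> = \<psi> H" using diff[OF H_Linf Linf_cmult[OF Linf_inv]] cmult[OF Linf_inv] inv_x by simp
  finally have 1: "\<psi> G = \<psi> H" .
  have "\<psi> G = \<psi> (\<lambda>x. (\<lambda>x. H x + B x) x - \<Phi> x)" by (simp add: G_def[abs_def])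
  also have "\<dots> = \<psi> H + \<psi> B - \<psi> \<Phi>"
    using diff[OF Linf_add[OF H_Linf B_Linf] \<Phi>_Linf] add[OF H_Linf B_Linf] by simp
  finally show ?thesis using 1 by simp
qed

end

locale main = bg + imean
begin

lemma g_Linf: "g \<in> Linf"
  unfolding Linf_def using gb by (auto intro!: borel_lebesgue_on AE_Rplus)

lemma F_Linf: "F \<in> Linf"
proof -
  have "continuous_on {1..} F" by (rule continuous_on_subset[OF F_cont]) auto
  then show ?thesis by (rule Linf_cont[OF _ F_bound])
qed

lemma step:
  assumes th: "\<theta> > 1"
  shows "\<psi> g \<le> (\<sigma> \<theta> + 2 * C) / ln \<theta>"
proof -
  interpret SM: smooth_mean \<psi> F C \<theta>
    by unfold_locales (use is_mean inv F_cont F_bound th in auto)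
  have Lp: "ln \<theta> > 0" using th by simp
  have "\<psi> g = \<psi> (Uop g)" using inv[OF g_Linf] by simp
  also have "\<dots> = \<psi> SM.B" using SM.B_eq F_Uop by simp
  finally have gB: "\<psi> g = \<psi> SM.B" .
  have Bx: "SM.B x \<le> (Q \<theta> x + 2 * C) / ln \<theta>" if x: "x \<ge> 1" for x
  proof -
    have "SM.D x = integral {x..\<theta> * x} (\<lambda>t. F t / t)"
      using SM.D_int[OF x] by (simp add: SM.q1_def[abs_def])
    also have "\<dots> = Q \<theta> x - (F (\<theta> * x) - F x)"
      using key1[OF x SM.x_le] x unfolding Q_def by simp
    finally have "SM.D x = Q \<theta> x - (F (\<theta> * x) - F x)" .
    moreover have "- (F (\<theta> * x) - F x) \<le> 2 * C" using F_bound[of x] F_bound[of "\<theta> * x"] by linarith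
    ultimately have "SM.D x \<le> Q \<theta> x + 2 * C" by linarith
    then show ?thesis unfolding SM.B_def using Lp by (simp add: divide_right_mono)
  qed
  have main: "\<psi> g * ln \<theta> \<le> \<sigma> \<theta> + 2 * C + e" if e: "e > 0" for e
  proof -
    have "\<forall>\<^sub>F x in at_top. Q \<theta> x < \<sigma> \<theta> + e" by (rule \<sigma>1) (use th e in auto)
    then obtain X0 where X0: "\<And>x. x \<ge> X0 \<Longrightarrow> Q \<theta> x < \<sigma> \<theta> + e"
      by (auto simp: eventually_at_top_linorder)
    define X where "X = max 1 X0"
    have "\<psi> SM.B \<le> (\<sigma> \<theta> + e + 2 * C) / ln \<theta>"
    proof (rule ev_bound[OF SM.B_Linf SM.B_bound])
      show "1 \<le> X" by (simp add: X_def)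
      fix x assume x: "X \<le> x"
      then have "x \<ge> 1" "x \<ge> X0" by (auto simp: X_def)
      have "SM.B x \<le> (Q \<theta> x + 2 * C) / ln \<theta>" by (rule Bx) fact
      also have "\<dots> \<le> (\<sigma> \<theta> + e + 2 * C) / ln \<theta>"
        using X0[OF \<open>x \<ge> X0\<close>] Lp by (intro divide_right_mono) auto
      finally show "SM.B x \<le> (\<sigma> \<theta> + e + 2 * C) / ln \<theta>" .
    qed
    then show ?thesis using gB Lp by (simp add: le_divide_eq)
  qed
  have "\<psi> g * ln \<theta> \<le> \<sigma> \<theta> + 2 * C" by (rule field_le_epsilon) (rule main)
  then show ?thesis using Lp by (simp add: le_divide_eq)
qed

lemma main_ineq: "ereal (\<psi> g) \<le> Lbar1 g"
proof -
  obtain m where m: "((\<lambda>\<theta>. \<sigma> \<theta> / ln \<theta>) \<longlongrightarrow> m) at_top" using \<sigma>_lim by blast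
  have lim2: "((\<lambda>\<theta>. 2 * C / ln \<theta>) \<longlongrightarrow> 0) at_top"
    by (rule tendsto_divide_0[OF tendsto_const filterlim_at_top_imp_at_infinity[OF ln_at_top]])
  have lim: "((\<lambda>\<theta>. \<sigma> \<theta> / ln \<theta> + 2 * C / ln \<theta>) \<longlongrightarrow> m + 0) at_top"
    by (rule tendsto_add[OF m lim2])
  have ev: "\<forall>\<^sub>F \<theta> in at_top. \<psi> g \<le> \<sigma> \<theta> / ln \<theta> + 2 * C / ln \<theta>"
    using eventually_gt_at_top[of "1::real"]
    by eventually_elim (use step in \<open>simp add: add_divide_distrib\<close>)
  have "\<psi> g \<le> m + 0"
    by (rule tendsto_le[OF _ lim tendsto_const ev]) simp
  then show ?thesis using Lbar1_g[OF m] by simp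
qed

end

lemma Uop_cong:
  assumes f: "f \<in> borel_measurable Rplus" and g: "g \<in> borel_measurable Rplus"
    and ae: "AE x in Rplus. f x = g x"
  shows "Uop f = Uop g"
proof
  fix x :: real
  have "integral\<^sup>L (lebesgue_on {1..x}) f = integral\<^sup>L (lebesgue_on {1..x}) g"
  proof (rule integral_cong_AE)
    show "f \<in> borel_measurable (lebesgue_on {1..x})" by (rule measurable_restrict_mono[OF f]) auto
    show "g \<in> borel_measurable (lebesgue_on {1..x})" by (rule measurable_restrict_mono[OF g]) auto
    show "AE t in lebesgue_on {1..x}. f t = g t" by (rule AE_Rplus_sub[OF ae]) simp
  qed
  then show "Uop f x = Uop g x" by (simp add: Uop_def)
qed

lemma borel_Linf: "g \<in> borel_measurable borel \<Longrightarrow> (\<And>x. \<bar>g x\<bar> \<le> C) \<Longrightarrow> g \<in> Linf"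
  unfolding Linf_def by (auto intro!: borel_lebesgue_on AE_Rplus)

lemma Uop_Linf:
  assumes f: "f \<in> Linf" shows "Uop f \<in> Linf"
proof -
  obtain g C where g: "g \<in> borel_measurable borel" "\<And>x. \<bar>g x\<bar> \<le> C" "AE x in Rplus. f x = g x"
    using borel_version[OF f] by blast
  interpret bg g C by unfold_locales (use g in auto)
  have "Uop f = Uop g"
    by (rule Uop_cong[OF _ borel_lebesgue_on[OF gm] g(3)]) (use f in \<open>simp add: Linf_def\<close>)
  then have "Uop f = F" using F_Uop by simp
  moreover have "continuous_on {1..} F" by (rule continuous_on_subset[OF F_cont]) auto
  then have "F \<in> Linf" by (rule Linf_cont[OF _ F_bound])
  ultimately show ?thesis by simp
qed

lemma Lbar1_cong:
  assumes f: "f \<in> borel_measurable Rplus" and g: "g \<in> borel_measurable Rplus"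
    and ae: "AE x in Rplus. f x = g x"
  shows "Lbar1 f = Lbar1 g"
proof -
  have "Limsup at_top (\<lambda>x. ereal (1 / ln \<theta> * integral\<^sup>L (lebesgue_on {x..\<theta> * x}) (\<lambda>t. f t / t))) =
        Limsup at_top (\<lambda>x. ereal (1 / ln \<theta> * integral\<^sup>L (lebesgue_on {x..\<theta> * x}) (\<lambda>t. g t / t)))" for \<theta> :: real
  proof (rule Limsup_eq)
    show "\<forall>\<^sub>F x in at_top. ereal (1 / ln \<theta> * integral\<^sup>L (lebesgue_on {x..\<theta> * x}) (\<lambda>t. f t / t)) =
        ereal (1 / ln \<theta> * integral\<^sup>L (lebesgue_on {x..\<theta> * x}) (\<lambda>t. g t / t))"
      using eventually_ge_at_top[of "1::real"]
    proof eventually_elim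
      case (elim x)
      have "integral\<^sup>L (lebesgue_on {x..\<theta> * x}) (\<lambda>t. f t / t) = integral\<^sup>L (lebesgue_on {x..\<theta> * x}) (\<lambda>t. g t / t)"
      proof (rule integral_cong_AE)
        have "f \<in> borel_measurable (lebesgue_on {x..\<theta> * x})" by (rule measurable_restrict_mono[OF f]) (use elim in auto)
        then show "(\<lambda>t. f t / t) \<in> borel_measurable (lebesgue_on {x..\<theta> * x})"
          by (rule borel_measurable_divide[OF _ borel_lebesgue_on]) simp
        have "g \<in> borel_measurable (lebesgue_on {x..\<theta> * x})" by (rule measurable_restrict_mono[OF g]) (use elim in auto)
        then show "(\<lambda>t. g t / t) \<in> borel_measurable (lebesgue_on {x..\<theta> * x})"
          by (rule borel_measurable_divide[OF _ borel_lebesgue_on]) simp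
        show "AE t in lebesgue_on {x..\<theta> * x}. f t / t = g t / t"
          using AE_Rplus_sub[OF ae elim] by eventually_elim simp
      qed
      then show ?case by simp
    qed
  qed
  then show ?thesis unfolding Lbar1_def by simp
qed

theorem theorem4p5:
  assumes "is_mean \<psi>"
  shows "(\<psi> \<in> L1_means \<longleftrightarrow> (\<forall>f\<in>Linf. \<psi> (\<lambda>x. f x - Uop f x) = 0))
       \<and> (\<psi> \<in> L1_means \<longleftrightarrow> (\<forall>f\<in>Linf. \<psi> (Uop f) = \<psi> f))"
proof -
  interpret mean \<psi> by unfold_locales (rule assms)
  have AB: "(\<forall>f\<in>Linf. \<psi> (\<lambda>x. f x - Uop f x) = 0) \<longleftrightarrow> (\<forall>f\<in>Linf. \<psi> (Uop f) = \<psi> f)"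
    using diff Uop_Linf by auto
  have PA: "\<forall>f\<in>Linf. \<psi> (\<lambda>x. f x - Uop f x) = 0" if P: "\<psi> \<in> L1_means"
  proof
    fix f assume f: "f \<in> Linf"
    obtain g C where g: "g \<in> borel_measurable borel" "\<And>x. \<bar>g x\<bar> \<le> C" "AE x in Rplus. f x = g x"
      using borel_version[OF f] by blast
    interpret bg g C by unfold_locales (use g in auto)
    have gL: "g \<in> Linf" by (rule borel_Linf[OF gm gb])
    have FL: "F \<in> Linf"
    proof -
      have "continuous_on {1..} F" by (rule continuous_on_subset[OF F_cont]) auto
      then show ?thesis by (rule Linf_cont[OF _ F_bound])
    qed
    have fm: "f \<in> borel_measurable Rplus" using f by (simp add: Linf_def)
    have UF: "Uop f = F"
      using Uop_cong[OF fm borel_lebesgue_on[OF gm] g(3)] F_Uop by simp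
    have w: "(\<lambda>x. g x - F x) \<in> Linf" by (rule Linf_diff[OF gL FL])
    have w': "(\<lambda>x. F x - g x) \<in> Linf" by (rule Linf_diff[OF FL gL])
    have "\<psi> (\<lambda>x. f x - Uop f x) = \<psi> (\<lambda>x. g x - F x)"
    proof (rule cong_AE[OF Linf_diff[OF f Uop_Linf[OF f]] w])
      show "AE x in Rplus. f x - Uop f x = g x - F x" using g(3) by eventually_elim (simp add: UF)
    qed
    moreover have "ereal (\<psi> (\<lambda>x. g x - F x)) \<le> Lbar1 (\<lambda>x. g x - F x)"
      using P w by (auto simp: L1_means_def)
    moreover have "ereal (\<psi> (\<lambda>x. F x - g x)) \<le> Lbar1 (\<lambda>x. F x - g x)"
      using P w' by (auto simp: L1_means_def)
    moreover have "\<psi> (\<lambda>x. F x - g x) = - \<psi> (\<lambda>x. g x - F x)"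
      using diff[OF FL gL] diff[OF gL FL] by simp
    ultimately show "\<psi> (\<lambda>x. f x - Uop f x) = 0" using Lbar1_w Lbar1_w' by simp
  qed
  have BP: "\<psi> \<in> L1_means" if B: "\<forall>f\<in>Linf. \<psi> (Uop f) = \<psi> f"
  proof -
    interpret imean \<psi> by unfold_locales (use B in auto)
    have "ereal (\<psi> f) \<le> Lbar1 f" if f: "f \<in> Linf" for f
    proof -
      obtain g C where g: "g \<in> borel_measurable borel" "\<And>x. \<bar>g x\<bar> \<le> C" "AE x in Rplus. f x = g x"
        using borel_version[OF f] by blast
      interpret main g C \<psi> by unfold_locales (use g B in auto)
      have fm: "f \<in> borel_measurable Rplus" using f by (simp add: Linf_def)
      have "\<psi> f = \<psi> g" by (rule cong_AE[OF f g_Linf g(3)])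
      moreover have "Lbar1 f = Lbar1 g" by (rule Lbar1_cong[OF fm borel_lebesgue_on[OF gm] g(3)])
      ultimately show ?thesis using main_ineq by simp
    qed
    then show ?thesis using assms by (auto simp: L1_means_def)
  qed
  show ?thesis using PA BP AB by blast
qed

end
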